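(* Let $A=(a^k)_{k\in[n]}$ be a finite collection (multiset) of points of $[0,1]^2$. For every two average fixed points $x,y$ of $A$, either $x\le\le y$ or $y\le\le x$.
   Context: For vectors, $x\le\le y$ means $x_1\le y_1$ and $x_2\le y_2$. For a finite nonempty multiset $B$, $\operatorname{avg}(B)$ is the arithmetic mean of its elements (with multiplicity). For $x\in[0,1]^2$: $A_{<,<}(x)=\{a\in A:a_1<x_1,a_2<x_2\}$ and $A_{\le,\le}(x)=\{a\in A:a_1\le x_1,a_2\le x_2\}$ (sub-multisets). A point $x$ is an average fixed point of $A$ if there exists a sub-multiset $B\subseteq A_{\le,\le}(x)\setminus A_{<,<}(x)$ such that $\operatorname{avg}\big((A\setminus A_{\le,\le}(x))\cup B\big)=x$. *)

theory Defs
  imports Complex_Main "HOL-Library.Multiset"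
begin

type_synonym pt = "real \<times> real"

definition unit_square :: "pt set" where
  "unit_square = {x. 0 \<le> fst x \<and> fst x \<le> 1 \<and> 0 \<le> snd x \<and> snd x \<le> 1}"

definition leqleq :: "pt \<Rightarrow> pt \<Rightarrow> bool" (infix "\<le>\<le>" 50) where
  "x \<le>\<le> y \<longleftrightarrow> fst x \<le> fst y \<and> snd x \<le> snd y"

definition avg :: "pt multiset \<Rightarrow> pt" where
  "avg B = ((\<Sum>a\<in>#B. fst a) / real (size B), (\<Sum>a\<in>#B. snd a) / real (size B))"

definition A_ltlt :: "pt multiset \<Rightarrow> pt \<Rightarrow> pt multiset" where
  "A_ltlt A x = filter_mset (\<lambda>a. fst a < fst x \<and> snd a < snd x) A"

definition A_lele :: "pt multiset \<Rightarrow> pt \<Rightarrow> pt multiset" where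
  "A_lele A x = filter_mset (\<lambda>a. fst a \<le> fst x \<and> snd a \<le> snd x) A"

definition avg_fixed_point :: "pt multiset \<Rightarrow> pt \<Rightarrow> bool" where
  "avg_fixed_point A x \<longleftrightarrow> x \<in> unit_square \<and>
     (\<exists>B. B \<subseteq># A_lele A x - A_ltlt A x \<and>
          (A - A_lele A x) + B \<noteq> {#} \<and>
          avg ((A - A_lele A x) + B) = x)"

end

theory Submission
  imports Defs
begin

lemma sum_diff_ms: "(\<Sum>a\<in>#M. (f a - g a :: real)) = (\<Sum>a\<in>#M. f a) - (\<Sum>a\<in>#M. g a)"
  by (induction M) auto

lemma sum_gt_ms:
  assumes "\<And>a. a \<in># M \<Longrightarrow> h a > (c::real)" "M \<noteq> {#}"
  shows "(\<Sum>a\<in>#M. h a) > real (size M) * c"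
  using assms
proof (induction M)
  case empty then show ?case by simp
next
  case (add x M)
  show ?case
  proof (cases "M = {#}")
    case True then show ?thesis using add by simp
  next
    case False
    then have "(\<Sum>a\<in>#M. h a) > real (size M) * c" using add by auto
    moreover have "h x > c" using add by auto
    ultimately show ?thesis by (simp add: algebra_simps)
  qed
qed

lemma sum_ge_ms:
  assumes "\<And>a. a \<in># M \<Longrightarrow> h a > (c::real)"
  shows "(\<Sum>a\<in>#M. h a) \<ge> real (size M) * c"
  using sum_gt_ms[where M=M and h=h and c=c] assms by (cases "M = {#}") auto

lemma sum_lt_ms:
  assumes "\<And>a. a \<in># M \<Longrightarrow> h a < (c::real)"
  shows "(\<Sum>a\<in>#M. h a) \<le> real (size M) * c"
proof -
  have "(\<Sum>a\<in>#M. - h a) \<ge> real (size M) * (- c)"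
    by (rule sum_ge_ms) (use assms in auto)
  moreover have "(\<Sum>a\<in>#M. - h a) = - (\<Sum>a\<in>#M. h a)"
    by (induction M) auto
  ultimately show ?thesis by simp
qed

lemma cnt_props:
  assumes "B \<subseteq># A_lele A x - A_ltlt A x"
  defines "P \<equiv> A - A_lele A x + B"
  shows "count P a \<le> count A a"
    and "count P a > 0 \<Longrightarrow> \<not> (fst a < fst x \<and> snd a < snd x)"
    and "\<not> (fst a \<le> fst x \<and> snd a \<le> snd x) \<Longrightarrow> count P a = count A a"
proof -
  have cB: "count B a \<le> count (A_lele A x - A_ltlt A x) a"
    using assms(1) by (rule mset_subset_eq_count)
  have cP: "count P a = count A a - count (A_lele A x) a + count B a"
    unfolding P_def by simp
  have cLe: "count (A_lele A x) a = (if fst a \<le> fst x \<and> snd a \<le> snd x then count A a else 0)"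
    unfolding A_lele_def by (simp only: count_filter_mset)
  have cLt: "count (A_ltlt A x) a = (if fst a < fst x \<and> snd a < snd x then count A a else 0)"
    unfolding A_ltlt_def by (simp only: count_filter_mset)
  show "count P a \<le> count A a"
    using cB cP cLe cLt by (cases "fst a \<le> fst x \<and> snd a \<le> snd x"; cases "fst a < fst x \<and> snd a < snd x") auto
  show "\<not> (fst a < fst x \<and> snd a < snd x)" if pos: "count P a > 0"
  proof
    assume h: "fst a < fst x \<and> snd a < snd x"
    then have "count (A_ltlt A x) a = count A a" "count (A_lele A x) a = count A a"
      using cLe cLt by auto
    then have "count P a = 0" using cB cP by simp
    then show False using pos by simp
  qed
  show "\<not> (fst a \<le> fst x \<and> snd a \<le> snd x) \<Longrightarrow> count P a = count A a"
    using cB cP cLe cLt by auto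
qed

lemma sum_from_avg:
  assumes "P \<noteq> {#}" "avg P = x"
  shows "(\<Sum>a\<in>#P. fst a - snd a) = real (size P) * (fst x - snd x)"
proof -
  have s: "size P > 0" using assms(1) by (simp add: nonempty_has_size)
  have "fst x = (\<Sum>a\<in>#P. fst a) / real (size P)" "snd x = (\<Sum>a\<in>#P. snd a) / real (size P)"
    using assms(2) by (auto simp: avg_def)
  then have "(\<Sum>a\<in>#P. fst a) = real (size P) * fst x" "(\<Sum>a\<in>#P. snd a) = real (size P) * snd x"
    using s by auto
  then show ?thesis by (simp add: sum_diff_ms right_diff_distrib)
qed

lemma core:
  fixes P Q A :: "pt multiset" and x y :: pt
  assumes lt1: "fst x < fst y" and lt2: "snd y < snd x"
    and P1: "\<And>a. count P a \<le> count A a"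
    and P2: "\<And>a. count P a > 0 \<Longrightarrow> \<not> (fst a < fst x \<and> snd a < snd x)"
    and P3: "\<And>a. \<not> (fst a \<le> fst x \<and> snd a \<le> snd x) \<Longrightarrow> count P a = count A a"
    and Q1: "\<And>a. count Q a \<le> count A a"
    and Q2: "\<And>a. count Q a > 0 \<Longrightarrow> \<not> (fst a < fst y \<and> snd a < snd y)"
    and Q3: "\<And>a. \<not> (fst a \<le> fst y \<and> snd a \<le> snd y) \<Longrightarrow> count Q a = count A a"
    and Pne: "P \<noteq> {#}"
    and SP: "(\<Sum>a\<in>#P. fst a - snd a) = real (size P) * (fst x - snd x)"
    and SQ: "(\<Sum>a\<in>#Q. fst a - snd a) = real (size Q) * (fst y - snd y)"
  shows False
proof -
  define f where "f = (\<lambda>a::pt. fst a - snd a)"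
  define I where "I = P - (P - Q)"
  have PI: "P = I + (P - Q)" unfolding I_def by (simp add: subset_mset.diff_add)
  have QI: "Q = I + (Q - P)" unfolding I_def
    by (auto simp: multiset_eq_iff)
  have fPQ: "f a > fst x - snd x" if "a \<in># P - Q" for a
  proof -
    have c: "count Q a < count P a" using that by (simp add: in_diff_count)
    have "fst a \<le> fst y \<and> snd a \<le> snd y"
    proof (rule ccontr)
      assume "\<not> (fst a \<le> fst y \<and> snd a \<le> snd y)"
      then have "count Q a = count A a" by (rule Q3)
      then show False using c P1[of a] by linarith
    qed
    moreover have "count P a > 0" using c by linarith
    then have "\<not> (fst a < fst x \<and> snd a < snd x)" by (rule P2)
    ultimately show ?thesis using lt2 unfolding f_def by auto
  qed
  have fQP: "f a < fst y - snd y" if "a \<in># Q - P" for a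
  proof -
    have c: "count P a < count Q a" using that by (simp add: in_diff_count)
    have "fst a \<le> fst x \<and> snd a \<le> snd x"
    proof (rule ccontr)
      assume "\<not> (fst a \<le> fst x \<and> snd a \<le> snd x)"
      then have "count P a = count A a" by (rule P3)
      then show False using c Q1[of a] by linarith
    qed
    moreover have "count Q a > 0" using c by linarith
    then have "\<not> (fst a < fst y \<and> snd a < snd y)" by (rule Q2)
    ultimately show ?thesis using lt1 unfolding f_def by auto
  qed
  have SP': "(\<Sum>a\<in>#I. f a) + (\<Sum>a\<in>#P - Q. f a) = (real (size I) + real (size (P - Q))) * (fst x - snd x)"
  proof -
    have "(\<Sum>a\<in>#P. f a) = (\<Sum>a\<in>#I. f a) + (\<Sum>a\<in>#P - Q. f a)"
      using PI by (metis image_mset_union sum_mset.union)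
    moreover have "size P = size I + size (P - Q)" using PI by (metis size_union)
    ultimately show ?thesis using SP unfolding f_def by simp
  qed
  have SQ': "(\<Sum>a\<in>#I. f a) + (\<Sum>a\<in>#Q - P. f a) = (real (size I) + real (size (Q - P))) * (fst y - snd y)"
  proof -
    have "(\<Sum>a\<in>#Q. f a) = (\<Sum>a\<in>#I. f a) + (\<Sum>a\<in>#Q - P. f a)"
      using QI by (metis image_mset_union sum_mset.union)
    moreover have "size Q = size I + size (Q - P)" using QI by (metis size_union)
    ultimately show ?thesis using SQ unfolding f_def by simp
  qed
  have g1: "(\<Sum>a\<in>#P - Q. f a) \<ge> real (size (P - Q)) * (fst x - snd x)"
    by (rule sum_ge_ms) (rule fPQ)
  have g2: "(\<Sum>a\<in>#Q - P. f a) \<le> real (size (Q - P)) * (fst y - snd y)"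
    by (rule sum_lt_ms) (rule fQP)
  have "real (size I) * (fst y - snd y) \<le> real (size I) * (fst x - snd x)"
    using SP' SQ' g1 g2 unfolding distrib_right by linarith
  then have "size I = 0" using lt1 lt2
  proof -
    assume a: "real (size I) * (fst y - snd y) \<le> real (size I) * (fst x - snd x)"
    have "fst x - snd x < fst y - snd y" using lt1 lt2 by simp
    then show ?thesis using a by (metis mult_less_cancel_left_pos not_le not_gr0 of_nat_0_less_iff)
  qed
  then have I0: "I = {#}" by simp
  then have "P - Q \<noteq> {#}" using PI Pne by simp
  then have "(\<Sum>a\<in>#P - Q. f a) > real (size (P - Q)) * (fst x - snd x)"
    using sum_gt_ms[where M="P - Q" and h=f and c="fst x - snd x", OF fPQ] by blast
  moreover have "(\<Sum>a\<in>#I. f a) = 0" "real (size I) = 0" using I0 by auto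
  ultimately show False using SP' unfolding distrib_right by simp
qed

theorem lemma2:
  fixes A :: "pt multiset" and x y :: pt
  assumes "set_mset A \<subseteq> unit_square"
    and "avg_fixed_point A x" and "avg_fixed_point A y"
  shows "x \<le>\<le> y \<or> y \<le>\<le> x"
proof (rule ccontr)
  assume nc: "\<not> (x \<le>\<le> y \<or> y \<le>\<le> x)"
  obtain Bx where Bx: "Bx \<subseteq># A_lele A x - A_ltlt A x" "A - A_lele A x + Bx \<noteq> {#}"
    "avg (A - A_lele A x + Bx) = x" using assms(2) unfolding avg_fixed_point_def by blast
  obtain By where By: "By \<subseteq># A_lele A y - A_ltlt A y" "A - A_lele A y + By \<noteq> {#}"
    "avg (A - A_lele A y + By) = y" using assms(3) unfolding avg_fixed_point_def by blast
  define P where "P = A - A_lele A x + Bx"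
  define Q where "Q = A - A_lele A y + By"
  note cP = cnt_props[OF Bx(1), folded P_def]
  note cQ = cnt_props[OF By(1), folded Q_def]
  have SP: "(\<Sum>a\<in>#P. fst a - snd a) = real (size P) * (fst x - snd x)"
    using sum_from_avg Bx unfolding P_def by blast
  have SQ: "(\<Sum>a\<in>#Q. fst a - snd a) = real (size Q) * (fst y - snd y)"
    using sum_from_avg By unfolding Q_def by blast
  have "(fst x < fst y \<and> snd y < snd x) \<or> (fst y < fst x \<and> snd x < snd y)"
    using nc unfolding leqleq_def by auto
  then show False
  proof
    assume h: "fst x < fst y \<and> snd y < snd x"
    show False
      using core[of x y P A Q, OF _ _ cP(1) cP(2) cP(3) cQ(1) cQ(2) cQ(3) _ SP SQ] h Bx(2)
      unfolding P_def by blast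
  next
    assume h: "fst y < fst x \<and> snd x < snd y"
    show False
      using core[of y x Q A P, OF _ _ cQ(1) cQ(2) cQ(3) cP(1) cP(2) cP(3) _ SQ SP] h By(2)
      unfolding Q_def by blast
  qed
qed

end
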